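(* The problem of classifying pairs of square matrices up to simultaneous similarity contains neither (i) the problem of classifying $m\times n\times 2$ spatial matrices up to equivalence, nor (ii) for any $p\in\{0,1,2,3\}$, the problem of classifying tensors of type $(p,3-p)$.
   Context: Matrices are over a field $k$. The pair problem: pairs $(M,N)$ of $n\times n$ matrices ($n$ arbitrary) up to simultaneous similarity $(M,N)\mapsto(S^{-1}MS,S^{-1}NS)$. An $m\times n\times q$ spatial matrix is a family $[a_{ijk}]$ of elements of $k$; two are equivalent if $a'_{i'j'k'}=\sum_{i,j,k}a_{ijk}r_{ii'}s_{jj'}t_{kk'}$ for nonsingular $R=[r_{ii'}]$, $S=[s_{jj'}]$, $T=[t_{kk'}]$; for $q=2$ this is the problem of classifying pairs $(A_1,A_2)$ of $m\times n$ matrices up to $(A_1,A_2)\mapsto(PA_1Q,PA_2Q)$ ($P,Q$ nonsingular) and $(A_1,A_2)\mapsto(A_1t_{11}+A_2t_{21},A_1t_{12}+A_2t_{22})$ ($[t_{ij}]$ nonsingular). Tensors of type $(p,3-p)$: families $[a_{i_1i_2i_3}]_{i_1,i_2,i_3=1}^m$ up to $b_{j_1j_2j_3}=\sum a_{i_1i_2i_3}c_{i_1j_1}\cdots c_{i_pj_p}d_{i_{p+1}j_{p+1}}\cdots d_{i_3j_3}$, $C=[c_{ij}]$ nonsingular, $[d_{ij}]=(C^T)^{-1}$. A matrix problem $\mathcal A$ is given by a set $\mathcal A_1$ of $a$-tuples of matrices and admissible transformations ("$A$ reduces to $A'$"). $\mathcal B$ contains $\mathcal A$ if there is a $b$-tuple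 $\mathcal T(x_1,\dots,x_a)$ of matrices whose entries are noncommutative polynomials in $x_1,\dots,x_a$ (substitution $x_i\mapsto A_i$ blockwise, scalars $c$ becoming $cI$) such that (i) $\mathcal T(A)\in\mathcal B_1$ for $A\in\mathcal A_1$, and (ii) for all $A,A'\in\mathcal A_1$, $A$ reduces to $A'$ iff $\mathcal T(A)$ reduces to $\mathcal T(A')$. *)

theory Defs
  imports "Jordan_Normal_Form.Matrix"
begin

datatype 'a ncpoly = Var nat | Const 'a | Add "'a ncpoly" "'a ncpoly" | Mul "'a ncpoly" "'a ncpoly"

text \<open>Value of a polynomial at a tuple of matrices: x_i becomes A_i, a scalar c becomes cI
  (the zero scalar is a zero block of any size).\<close>
inductive ev :: "'a::field mat list \<Rightarrow> 'a ncpoly \<Rightarrow> 'a mat \<Rightarrow> bool" for A where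
  ev_var: "i < length A \<Longrightarrow> ev A (Var i) (A ! i)"
| ev_const: "ev A (Const c) (c \<cdot>\<^sub>m 1\<^sub>m n)"
| ev_zero: "ev A (Const 0) (0\<^sub>m r s)"
| ev_add: "ev A p M \<Longrightarrow> ev A q N \<Longrightarrow> dim_row M = dim_row N \<Longrightarrow> dim_col M = dim_col N
           \<Longrightarrow> ev A (Add p q) (M + N)"
| ev_mul: "ev A p M \<Longrightarrow> ev A q N \<Longrightarrow> dim_col M = dim_row N \<Longrightarrow> ev A (Mul p q) (M * N)"

text \<open>Sizes of blocks: each block row / column has the size of a row or column dimension
  of one of the substituted matrices.\<close>
datatype dimsym = RowOf nat | ColOf nat

fun dimval :: "'a mat list \<Rightarrow> dimsym \<Rightarrow> nat" where
  "dimval A (RowOf i) = dim_row (A ! i)"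
| "dimval A (ColOf i) = dim_col (A ! i)"

record 'a pmat =
  prows :: "dimsym list"
  pcols :: "dimsym list"
  pent :: "nat \<Rightarrow> nat \<Rightarrow> 'a ncpoly"

definition subst_pmat :: "'a::field pmat \<Rightarrow> 'a mat list \<Rightarrow> 'a mat \<Rightarrow> bool" where
  "subst_pmat T A M \<longleftrightarrow>
     (let R = map (dimval A) (prows T); C = map (dimval A) (pcols T) in
      (\<forall>d\<in>set (prows T) \<union> set (pcols T). case d of RowOf i \<Rightarrow> i < length A | ColOf i \<Rightarrow> i < length A) \<and>
      dim_row M = sum_list R \<and> dim_col M = sum_list C \<and>
      (\<exists>E. \<forall>r < length R. \<forall>s < length C.
          E r s \<in> carrier_mat (R ! r) (C ! s) \<and> ev A (pent T r s) (E r s) \<and>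
          (\<forall>i < R ! r. \<forall>j < C ! s.
             M $$ (sum_list (take r R) + i, sum_list (take s C) + j) = E r s $$ (i, j))))"

definition subst_tuple :: "'a::field pmat list \<Rightarrow> 'a mat list \<Rightarrow> 'a mat list \<Rightarrow> bool" where
  "subst_tuple T A Ms \<longleftrightarrow> length Ms = length T \<and> (\<forall>l < length T. subst_pmat (T ! l) A (Ms ! l))"

text \<open>A matrix problem: a set of tuples of matrices together with the relation "reduces to".\<close>
type_synonym 'a matrix_problem = "'a mat list set \<times> ('a mat list \<Rightarrow> 'a mat list \<Rightarrow> bool)"

definition contains :: "'a::field matrix_problem \<Rightarrow> 'a matrix_problem \<Rightarrow> bool" where
  "contains \<B> \<A> \<longleftrightarrow> (\<exists>T.
     (\<forall>A\<in>fst \<A>. \<exists>Ms. subst_tuple T A Ms) \<and>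
     (\<forall>A\<in>fst \<A>. \<forall>Ms. subst_tuple T A Ms \<longrightarrow> Ms \<in> fst \<B>) \<and>
     (\<forall>A\<in>fst \<A>. \<forall>A'\<in>fst \<A>. \<forall>Ms Ms'. subst_tuple T A Ms \<longrightarrow> subst_tuple T A' Ms' \<longrightarrow>
        (snd \<A> A A' \<longleftrightarrow> snd \<B> Ms Ms')))"

definition pair_problem :: "'a::field matrix_problem" where
  "pair_problem =
    ({[M, N] | M N n. n \<ge> 1 \<and> M \<in> carrier_mat n n \<and> N \<in> carrier_mat n n},
     \<lambda>X Y. \<exists>n S Sinv. S \<in> carrier_mat n n \<and> Sinv \<in> carrier_mat n n \<and>
       S * Sinv = 1\<^sub>m n \<and> Sinv * S = 1\<^sub>m n \<and>
       (\<exists>M N. X = [M, N] \<and> M \<in> carrier_mat n n \<and> N \<in> carrier_mat n n \<and>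
         Y = [Sinv * M * S, Sinv * N * S]))"

text \<open>m x n x 2 spatial matrices [a_ijk], given by the pair (A_1, A_2), A_k = [a_ijk]_ij.
  [a'_i'j'k'] = sum a_ijk r_ii' s_jj' t_kk' means A'_k' = R^T (sum_k t_kk' A_k) S.\<close>
definition spatial2_problem :: "'a::field matrix_problem" where
  "spatial2_problem =
    ({[A1, A2] | A1 A2 m n. m \<ge> 1 \<and> n \<ge> 1 \<and> A1 \<in> carrier_mat m n \<and> A2 \<in> carrier_mat m n},
     \<lambda>X Y. \<exists>m n R S T A1 A2. X = [A1, A2] \<and> A1 \<in> carrier_mat m n \<and> A2 \<in> carrier_mat m n \<and>
       R \<in> carrier_mat m m \<and> invertible_mat R \<and> S \<in> carrier_mat n n \<and> invertible_mat S \<and>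
       T \<in> carrier_mat 2 2 \<and> invertible_mat T \<and>
       Y = [transpose_mat R * (T $$ (0,0) \<cdot>\<^sub>m A1 + T $$ (1,0) \<cdot>\<^sub>m A2) * S,
            transpose_mat R * (T $$ (0,1) \<cdot>\<^sub>m A1 + T $$ (1,1) \<cdot>\<^sub>m A2) * S])"

text \<open>An m x m x m array [a_ijk] is given by the m x m^2 matrix [A_1 | ... | A_m]
  of its slices A_k = [a_ijk]_ij (0-based: entry (i, k*m + j) is a_ijk).\<close>
definition tent :: "nat \<Rightarrow> 'a mat \<Rightarrow> nat \<Rightarrow> nat \<Rightarrow> nat \<Rightarrow> 'a" where
  "tent m M i j k = M $$ (i, k * m + j)"

text \<open>Tensors of type (p, 3-p): the first p indices transform by C, the others by
  D = (C^T)^(-1).\<close>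
definition tensor_problem :: "nat \<Rightarrow> 'a::field matrix_problem" where
  "tensor_problem p =
    ({[M] | M m. m \<ge> 1 \<and> M \<in> carrier_mat m (m * m)},
     \<lambda>X Y. \<exists>m M N C D. X = [M] \<and> Y = [N] \<and> m \<ge> 1 \<and>
       M \<in> carrier_mat m (m * m) \<and> N \<in> carrier_mat m (m * m) \<and>
       C \<in> carrier_mat m m \<and> D \<in> carrier_mat m m \<and>
       transpose_mat C * D = 1\<^sub>m m \<and> D * transpose_mat C = 1\<^sub>m m \<and>
       (let F = (\<lambda>l. if l < p then C else D) in
        \<forall>j1<m. \<forall>j2<m. \<forall>j3<m.
          tent m N j1 j2 j3 =
            (\<Sum>i1<m. \<Sum>i2<m. \<Sum>i3<m. tent m M i1 i2 i3 *
               F 0 $$ (i1, j1) * F 1 $$ (i2, j2) * F 2 $$ (i3, j3))))"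

end

theory Submission
  imports Defs
begin

fun cst :: "'a::field ncpoly \<Rightarrow> 'a" where
  "cst (Var i) = 0" | "cst (Const c) = c" | "cst (Add p q) = cst p + cst q" | "cst (Mul p q) = cst p * cst q"
fun lin :: "'a::field ncpoly \<Rightarrow> 'a" where
  "lin (Var i) = 1" | "lin (Const c) = 0" | "lin (Add p q) = lin p + lin q"
| "lin (Mul p q) = cst p * lin q + lin p * cst q"

definition TI :: "'a::field mat \<Rightarrow> 'a ncpoly \<Rightarrow> 'a mat \<Rightarrow> bool" where
 "TI M p E \<longleftrightarrow> (dim_row E = 2 \<and> dim_col E = 4 \<longrightarrow> E = lin p \<cdot>\<^sub>m M \<and> cst p = 0) \<and>
         (\<not>(dim_row E = 2 \<and> dim_col E = 4) \<longrightarrow> lin p = 0 \<and>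
            (dim_row E = dim_col E \<longrightarrow> E = cst p \<cdot>\<^sub>m 1\<^sub>m (dim_row E)) \<and>
            (dim_row E \<noteq> dim_col E \<longrightarrow> E = 0\<^sub>m (dim_row E) (dim_col E) \<and> cst p = 0))"

lemma ev_tensor:
  assumes "ev [M] p E" "M \<in> carrier_mat 2 4"
  shows "TI M p E"
  using assms(1)
proof induction
  case (ev_var i)
  then show ?case using assms(2) by (auto simp: TI_def)
next
  case (ev_const c n)
  then show ?case by (auto simp: TI_def)
next
  case (ev_zero r s)
  then show ?case using assms(2) by (auto simp: TI_def intro!: eq_matI)
next
  case (ev_add p M1 q N1)
  obtain r c where rc: "dim_row M1 = r" "dim_col M1 = c" by blast
  have rc2: "dim_row N1 = r" "dim_col N1 = c" using rc ev_add(3,4) by auto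
  show ?case
  proof (cases "r = 2 \<and> c = 4")
    case True
    then have "M1 = lin p \<cdot>\<^sub>m M" "cst p = 0" "N1 = lin q \<cdot>\<^sub>m M" "cst q = 0"
      using ev_add(5,6) rc rc2 unfolding TI_def by auto
    then show ?thesis using True assms(2) unfolding TI_def
      by (simp add: add_smult_distrib_right_mat)
  next
    case F: False
    then have l: "lin p = 0" "lin q = 0" using ev_add(5,6) rc rc2 unfolding TI_def by auto
    show ?thesis
    proof (cases "r = c")
      case True
      then have "M1 = cst p \<cdot>\<^sub>m 1\<^sub>m r" "N1 = cst q \<cdot>\<^sub>m 1\<^sub>m r"
        using ev_add(5,6) F rc rc2 unfolding TI_def by auto
      then show ?thesis using True F l unfolding TI_def
        by (auto intro!: eq_matI simp: algebra_simps)
    next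
      case False
      then have "M1 = 0\<^sub>m r c" "N1 = 0\<^sub>m r c" "cst p = 0" "cst q = 0"
        using ev_add(5,6) F rc rc2 unfolding TI_def by auto
      then show ?thesis using False F l unfolding TI_def by auto
    qed
  qed
next
  case (ev_mul p M1 q N1)
  have M: "M \<in> carrier_mat 2 4" by fact
  obtain r k s where rks: "dim_row M1 = r" "dim_col M1 = k" "dim_row N1 = k" "dim_col N1 = s"
    using ev_mul(3) by blast
  note I1 = ev_mul(4)[unfolded TI_def rks]
  note I2 = ev_mul(5)[unfolded TI_def rks]
  show ?case
  proof (cases "r = 2 \<and> k = 4")
    case True
    then have e1: "M1 = lin p \<cdot>\<^sub>m M" "cst p = 0" using I1 by auto
    show ?thesis
    proof (cases "s = 4")
      case True
      then have "N1 = cst q \<cdot>\<^sub>m 1\<^sub>m 4" "lin q = 0" using I2 \<open>r = 2 \<and> k = 4\<close> by auto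
      then show ?thesis using e1 M True \<open>r = 2 \<and> k = 4\<close>
        by (auto simp: TI_def mult_smult_distrib mult_smult_assoc_mat)
    next
      case False
      then have "N1 = 0\<^sub>m 4 s" "lin q = 0" "cst q = 0" using I2 \<open>r = 2 \<and> k = 4\<close> by auto
      then show ?thesis using e1 M False \<open>r = 2 \<and> k = 4\<close>
        by (auto simp: TI_def)
    qed
  next
    case F1: False
    then have l1: "lin p = 0" using I1 by auto
    show ?thesis
    proof (cases "k = 2 \<and> s = 4")
      case True
      then have e2: "N1 = lin q \<cdot>\<^sub>m M" "cst q = 0" using I2 by auto
      show ?thesis
      proof (cases "r = 2")
        case True
        then have "M1 = cst p \<cdot>\<^sub>m 1\<^sub>m 2" using I1 \<open>k = 2 \<and> s = 4\<close> by auto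
        then show ?thesis using e2 M True l1 \<open>k = 2 \<and> s = 4\<close>
          by (auto simp: TI_def mult_smult_distrib mult_smult_assoc_mat)
      next
        case False
        then have "M1 = 0\<^sub>m r 2" "cst p = 0" using I1 \<open>k = 2 \<and> s = 4\<close> by auto
        then show ?thesis using e2 M False l1 \<open>k = 2 \<and> s = 4\<close>
          by (auto simp: TI_def)
      qed
    next
      case F2: False
      then have l2: "lin q = 0" using I2 by auto
      show ?thesis
      proof (cases "r = k \<and> k = s")
        case True
        then have "M1 = cst p \<cdot>\<^sub>m 1\<^sub>m r" "N1 = cst q \<cdot>\<^sub>m 1\<^sub>m r"
          using I1 I2 F1 F2 by auto
        then show ?thesis using True l1 l2 F1 rks
          by (auto simp: TI_def mult_smult_distrib mult_smult_assoc_mat)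
      next
        case False
        have "M1 * N1 = 0\<^sub>m r s \<and> cst p * cst q = 0"
        proof (cases "r = k")
          case True
          then have "k \<noteq> s" using False by auto
          then have "N1 = 0\<^sub>m k s" "cst q = 0" using I2 F2 by auto
          then show ?thesis using rks by auto
        next
          case False
          then have "M1 = 0\<^sub>m r k" "cst p = 0" using I1 F1 by auto
          then show ?thesis using rks by auto
        qed
        then show ?thesis using l1 l2 rks M by (auto simp: TI_def intro!: eq_matI)
      qed
    qed
  qed
qed

fun val :: "(nat \<Rightarrow> 'a::field) \<Rightarrow> 'a ncpoly \<Rightarrow> 'a" where
  "val w (Var i) = w i" | "val w (Const c) = c" | "val w (Add p q) = val w p + val w q"
| "val w (Mul p q) = val w p * val w q"

definition dmat :: "nat \<Rightarrow> (nat \<Rightarrow> 'a::field) \<Rightarrow> 'a mat" where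
  "dmat k f = mat k k (\<lambda>(i,j). if i = j then f i else 0)"

lemma dmat_carrier[simp]: "dim_row (dmat k f) = k" "dim_col (dmat k f) = k"
  by (auto simp: dmat_def)

lemma dmat_mult: "dmat k f * dmat k g = dmat k (\<lambda>i. f i * g i)"
proof (rule eq_matI)
  fix i j assume ij: "i < dim_row (dmat k (\<lambda>i. f i * g i))" "j < dim_col (dmat k (\<lambda>i. f i * g i))"
  then have "(dmat k f * dmat k g) $$ (i,j) = (\<Sum>c<k. (if i = c then f i else 0) * (if c = j then g c else 0))"
    by (auto simp: dmat_def scalar_prod_def row_def col_def intro!: sum.cong)
  also have "\<dots> = (\<Sum>c<k. if c = i then (f i * (if i = j then g i else 0)) else 0)"
    by (intro sum.cong) auto
  also have "\<dots> = dmat k (\<lambda>i. f i * g i) $$ (i,j)" using ij by (auto simp: dmat_def)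
  finally show "(dmat k f * dmat k g) $$ (i,j) = dmat k (\<lambda>i. f i * g i) $$ (i,j)" .
qed auto

lemma dmat_add: "dmat k f + dmat k g = dmat k (\<lambda>i. f i + g i)"
  by (auto simp: dmat_def intro!: eq_matI)

definition DI :: "nat \<Rightarrow> (nat \<Rightarrow> nat \<Rightarrow> 'a::field) \<Rightarrow> 'a ncpoly \<Rightarrow> 'a mat \<Rightarrow> bool" where
 "DI k W p E \<longleftrightarrow> (dim_row E = k \<and> dim_col E = k \<longrightarrow> E = dmat k (\<lambda>i. val (W i) p)) \<and>
    (dim_row E = dim_col E \<and> dim_row E \<noteq> k \<longrightarrow> (\<forall>w. E = val w p \<cdot>\<^sub>m 1\<^sub>m (dim_row E))) \<and>
    (dim_row E \<noteq> dim_col E \<longrightarrow> E = 0\<^sub>m (dim_row E) (dim_col E) \<and> (\<forall>w. val w p = 0))"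

lemma ev_diag:
  assumes "ev A p E" "\<forall>x\<in>set A. x \<in> carrier_mat k k"
    "\<forall>x\<in>set A. \<forall>i<k. \<forall>j<k. i \<noteq> j \<longrightarrow> x $$ (i,j) = 0"
    "\<forall>i<k. \<forall>v<length A. A ! v $$ (i,i) = W i v"
  shows "DI k W p E"
  using assms(1)
proof induction
  case (ev_var i)
  then have c: "A ! i \<in> carrier_mat k k" and d: "\<forall>a<k. \<forall>b<k. a \<noteq> b \<longrightarrow> A ! i $$ (a,b) = 0"
    using assms(2,3) by auto
  have "A ! i = dmat k (\<lambda>j. W j i)"
    using c d assms(4) ev_var by (auto simp: dmat_def intro!: eq_matI)
  then show ?case using c by (auto simp: DI_def)
next
  case (ev_const c n)
  then show ?case by (auto simp: DI_def dmat_def intro!: eq_matI)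
next
  case (ev_zero r s)
  then show ?case by (auto simp: DI_def dmat_def intro!: eq_matI)
next
  case (ev_add p M1 q N1)
  obtain r c where rc: "dim_row M1 = r" "dim_col M1 = c" by blast
  have rc2: "dim_row N1 = r" "dim_col N1 = c" using rc ev_add(3,4) by auto
  note I1 = ev_add(5)[unfolded DI_def rc]
  note I2 = ev_add(6)[unfolded DI_def rc2]
  show ?case
  proof (cases "r = c")
    case True
    show ?thesis
    proof (cases "r = k")
      case True
      then show ?thesis using I1 I2 \<open>r = c\<close> rc rc2 by (auto simp: DI_def dmat_add)
    next
      case False
      then have "\<forall>w. M1 = val w p \<cdot>\<^sub>m 1\<^sub>m r" "\<forall>w. N1 = val w q \<cdot>\<^sub>m 1\<^sub>m r" using I1 I2 \<open>r = c\<close> by auto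
      then have "\<forall>w. M1 + N1 = val w (Add p q) \<cdot>\<^sub>m 1\<^sub>m r"
      proof (intro allI)
        fix w assume h: "\<forall>w. M1 = val w p \<cdot>\<^sub>m 1\<^sub>m r" "\<forall>w. N1 = val w q \<cdot>\<^sub>m 1\<^sub>m r"
        then have "M1 = val w p \<cdot>\<^sub>m 1\<^sub>m r" "N1 = val w q \<cdot>\<^sub>m 1\<^sub>m r" by auto
        then show "M1 + N1 = val w (Add p q) \<cdot>\<^sub>m 1\<^sub>m r"
          by (auto intro!: eq_matI simp: algebra_simps)
      qed
      then show ?thesis using False \<open>r = c\<close> rc rc2 by (auto simp: DI_def)
    qed
  next
    case False
    then show ?thesis using I1 I2 rc rc2 by (auto simp: DI_def)
  qed
next
  case (ev_mul p M1 q N1)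
  obtain r m s where rks: "dim_row M1 = r" "dim_col M1 = m" "dim_row N1 = m" "dim_col N1 = s"
    using ev_mul(3) by blast
  note I1 = ev_mul(4)[unfolded DI_def rks]
  note I2 = ev_mul(5)[unfolded DI_def rks]
  show ?case
  proof (cases "r = m \<and> m = s")
    case True
    show ?thesis
    proof (cases "r = k")
      case True
      then show ?thesis using I1 I2 \<open>r = m \<and> m = s\<close> rks by (auto simp: DI_def dmat_mult)
    next
      case False
      then have "\<forall>w. M1 = val w p \<cdot>\<^sub>m 1\<^sub>m r" "\<forall>w. N1 = val w q \<cdot>\<^sub>m 1\<^sub>m r" using I1 I2 \<open>r = m \<and> m = s\<close> by auto
      then have "\<forall>w. M1 * N1 = val w (Mul p q) \<cdot>\<^sub>m 1\<^sub>m r"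
      proof (intro allI)
        fix w assume h: "\<forall>w. M1 = val w p \<cdot>\<^sub>m 1\<^sub>m r" "\<forall>w. N1 = val w q \<cdot>\<^sub>m 1\<^sub>m r"
        then have "M1 = val w p \<cdot>\<^sub>m 1\<^sub>m r" "N1 = val w q \<cdot>\<^sub>m 1\<^sub>m r" by auto
        then show "M1 * N1 = val w (Mul p q) \<cdot>\<^sub>m 1\<^sub>m r"
          by (simp add: mult_smult_distrib[of _ r r _ r] mult_smult_assoc_mat[of _ r r _ r]) (auto intro!: eq_matI)
      qed
      then show ?thesis using False \<open>r = m \<and> m = s\<close> rks by (auto simp: DI_def)
    qed
  next
    case False
    have z: "M1 * N1 = 0\<^sub>m r s \<and> (\<forall>w. val w (Mul p q) = 0)"
    proof (cases "r = m")
      case True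
      then have "m \<noteq> s" using False by auto
      then have "N1 = 0\<^sub>m m s" "\<forall>w. val w q = 0" using I2 by auto
      then show ?thesis using rks by auto
    next
      case False
      then have "M1 = 0\<^sub>m r m" "\<forall>w. val w p = 0" using I1 by auto
      then show ?thesis using rks by auto
    qed
    then show ?thesis using rks by (auto simp: DI_def dmat_def intro!: eq_matI)
  qed
qed

lemma decomp: "a < sum_list (R::nat list) \<Longrightarrow> \<exists>r<length R. \<exists>i<R!r. a = sum_list (take r R) + i"
proof (induction R arbitrary: a)
  case Nil then show ?case by auto
next
  case (Cons x R)
  show ?case
  proof (cases "a < x")
    case True then show ?thesis by (intro exI[of _ 0]) auto
  next
    case False
    then have "a - x < sum_list R" using Cons.prems by simp
    then obtain r i where "r < length R" "i < R!r" "a - x = sum_list (take r R) + i" using Cons.IH by blast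
    then show ?thesis using False by (intro exI[of _ "Suc r"]) auto
  qed
qed

lemma map_const_repl: "\<forall>d\<in>set xs. f d = k \<Longrightarrow> map f xs = replicate (length xs) k"
  by (induction xs) auto

definition gm :: "'a::field pmat \<Rightarrow> (nat \<Rightarrow> 'a) \<Rightarrow> 'a mat" where
  "gm t w = mat (length (prows t)) (length (pcols t)) (\<lambda>(r,s). val w (pent t r s))"

lemma subst_diag:
  assumes "subst_pmat t A Ms" "\<forall>x\<in>set A. x \<in> carrier_mat k k"
    "\<forall>x\<in>set A. \<forall>i<k. \<forall>j<k. i \<noteq> j \<longrightarrow> x $$ (i,j) = 0"
    "\<forall>i<k. \<forall>v<length A. A ! v $$ (i,i) = W i v"
  shows "Ms \<in> carrier_mat (k * length (prows t)) (k * length (pcols t))"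
    "\<And>r s i j. r < length (prows t) \<Longrightarrow> s < length (pcols t) \<Longrightarrow> i < k \<Longrightarrow> j < k \<Longrightarrow>
       Ms $$ (k*r+i, k*s+j) = (if i = j then val (W i) (pent t r s) else 0)"
proof -
  have lab: "\<forall>d\<in>set (prows t) \<union> set (pcols t). case d of RowOf i \<Rightarrow> i < length A | ColOf i \<Rightarrow> i < length A"
    using assms(1) unfolding subst_pmat_def Let_def by blast
  have dk: "\<forall>d\<in>set (prows t) \<union> set (pcols t). dimval A d = k"
  proof
    fix d assume "d \<in> set (prows t) \<union> set (pcols t)"
    then have "case d of RowOf i \<Rightarrow> i < length A | ColOf i \<Rightarrow> i < length A" using lab by blast
    then show "dimval A d = k" using assms(2) by (cases d) (auto dest: nth_mem)
  qed
  have R: "map (dimval A) (prows t) = replicate (length (prows t)) k"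
    and C: "map (dimval A) (pcols t) = replicate (length (pcols t)) k"
    using dk by (auto intro!: map_const_repl)
  obtain E where dims: "dim_row Ms = length (prows t) * k" "dim_col Ms = length (pcols t) * k"
    and E: "\<forall>r < length (prows t). \<forall>s < length (pcols t).
          E r s \<in> carrier_mat k k \<and> ev A (pent t r s) (E r s) \<and>
          (\<forall>i < k. \<forall>j < k.
             Ms $$ (r * k + i, s * k + j) = E r s $$ (i, j))"
    using assms(1) unfolding subst_pmat_def Let_def R C
    by (auto simp: sum_list_replicate take_replicate min_def split: if_splits)
  show "Ms \<in> carrier_mat (k * length (prows t)) (k * length (pcols t))"
    using dims by (auto simp: mult.commute)
  fix r s i j assume rs: "r < length (prows t)" "s < length (pcols t)" "i < k" "j < k"
  then have Ec: "E r s \<in> carrier_mat k k" "ev A (pent t r s) (E r s)" and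
    e0: "Ms $$ (r*k + i, s*k + j) = E r s $$ (i, j)" using E by auto
  have e: "Ms $$ (k*r + i, k*s + j) = E r s $$ (i, j)" using e0 by (simp add: mult.commute)
  from Ec have "E r s = dmat k (\<lambda>i. val (W i) (pent t r s))"
    using ev_diag[OF _ assms(2,3,4)] unfolding DI_def by auto
  then show "Ms $$ (k*r+i, k*s+j) = (if i = j then val (W i) (pent t r s) else 0)"
    using e rs by (simp add: dmat_def)
qed

definition inter :: "'a::field mat \<Rightarrow> 'a mat \<Rightarrow> 'a mat" where
  "inter F0 F1 = mat (2 * dim_row F0) (2 * dim_col F0)
     (\<lambda>(a,b). if a mod 2 = b mod 2 then (if a mod 2 = 0 then F0 else F1) $$ (a div 2, b div 2) else 0)"

lemma inter_dims[simp]: "dim_row (inter F0 F1) = 2 * dim_row F0" "dim_col (inter F0 F1) = 2 * dim_col F0"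
  by (auto simp: inter_def)

lemma sum_even_odd: "(\<Sum>x<2*(b::nat). f x) = (\<Sum>d<b. f (2*d) + f (2*d+1))"
  by (induction b) (auto simp: sum.distrib ac_simps)

lemma inter_mult:
  assumes "F0 \<in> carrier_mat a b" "F1 \<in> carrier_mat a b" "G0 \<in> carrier_mat b c" "G1 \<in> carrier_mat b c"
  shows "inter F0 F1 * inter G0 G1 = inter (F0 * G0) (F1 * G1)"
proof (rule eq_matI)
  fix i j assume ij: "i < dim_row (inter (F0 * G0) (F1 * G1))" "j < dim_col (inter (F0 * G0) (F1 * G1))"
  then have i: "i < 2*a" and j: "j < 2*c" using assms by auto
  have "(inter F0 F1 * inter G0 G1) $$ (i,j) = (\<Sum>x<2*b. inter F0 F1 $$ (i,x) * inter G0 G1 $$ (x,j))"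
    using i j assms by (auto simp: scalar_prod_def intro!: sum.cong)
  also have "\<dots> = (\<Sum>d<b. inter F0 F1 $$ (i,2*d) * inter G0 G1 $$ (2*d,j) + inter F0 F1 $$ (i,2*d+1) * inter G0 G1 $$ (2*d+1,j))"
    by (rule sum_even_odd)
  also have "\<dots> = inter (F0 * G0) (F1 * G1) $$ (i,j)"
    using i j assms
    by (auto simp: inter_def scalar_prod_def intro!: sum.cong)
  finally show "(inter F0 F1 * inter G0 G1) $$ (i,j) = inter (F0 * G0) (F1 * G1) $$ (i,j)" .
qed (use assms in auto)

lemma inter_one: "inter (1\<^sub>m n) (1\<^sub>m n) = (1\<^sub>m (2*n) :: 'a::field mat)"
proof (rule eq_matI)
  fix i j assume "i < dim_row (1\<^sub>m (2*n) :: 'a mat)" "j < dim_col (1\<^sub>m (2*n) :: 'a mat)"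
  then show "inter (1\<^sub>m n) (1\<^sub>m n) $$ (i,j) = (1\<^sub>m (2*n) :: 'a mat) $$ (i,j)"
    by (auto simp: inter_def) (metis div_mult_mod_eq)+
qed auto

lemma subst_diag1:
  assumes "subst_pmat t A Ms" "\<forall>x\<in>set A. x \<in> carrier_mat 1 1"
    "\<forall>v<length A. A ! v $$ (0,0) = w v"
  shows "Ms = gm t w"
proof -
  have c: "Ms \<in> carrier_mat (1 * length (prows t)) (1 * length (pcols t))"
    and e: "\<And>r s i j. r < length (prows t) \<Longrightarrow> s < length (pcols t) \<Longrightarrow> i < 1 \<Longrightarrow> j < 1 \<Longrightarrow>
       Ms $$ (1*r+i, 1*s+j) = (if i = j then val ((\<lambda>_. w) i) (pent t r s) else 0)"
    using subst_diag[of t A Ms 1 "\<lambda>_. w"] assms by auto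
  show ?thesis using c e[of _ _ 0 0] by (auto simp: gm_def intro!: eq_matI)
qed

lemma subst_diag2:
  assumes "subst_pmat t A Ms" "\<forall>x\<in>set A. x \<in> carrier_mat 2 2"
    "\<forall>x\<in>set A. \<forall>i<2. \<forall>j<2. i \<noteq> j \<longrightarrow> x $$ (i,j) = 0"
    "\<forall>v<length A. A ! v $$ (0,0) = w0 v" "\<forall>v<length A. A ! v $$ (1,1) = w1 v"
  shows "Ms = inter (gm t w0) (gm t w1)"
proof -
  let ?W = "\<lambda>i. if i = 0 then w0 else w1"
  have W: "\<forall>i<2. \<forall>v<length A. A ! v $$ (i,i) = ?W i v"
    using assms(4,5) by (auto simp: less_2_cases_iff)
  have c: "Ms \<in> carrier_mat (2 * length (prows t)) (2 * length (pcols t))"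
    and e: "\<And>r s i j. r < length (prows t) \<Longrightarrow> s < length (pcols t) \<Longrightarrow> i < 2 \<Longrightarrow> j < 2 \<Longrightarrow>
       Ms $$ (2*r+i, 2*s+j) = (if i = j then val (?W i) (pent t r s) else 0)"
    using subst_diag[OF assms(1,2,3) W] by auto
  show ?thesis
  proof (rule eq_matI)
    fix a b assume ab: "a < dim_row (inter (gm t w0) (gm t w1))" "b < dim_col (inter (gm t w0) (gm t w1))"
    then have a: "a div 2 < length (prows t)" and b: "b div 2 < length (pcols t)" by (auto simp: gm_def)
    have "Ms $$ (a,b) = (if a mod 2 = b mod 2 then val (?W (a mod 2)) (pent t (a div 2) (b div 2)) else 0)"
      using e[OF a b, of "a mod 2" "b mod 2"] by simp
    also have "\<dots> = inter (gm t w0) (gm t w1) $$ (a,b)"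
      using ab a b by (auto simp: inter_def gm_def)
    finally show "Ms $$ (a,b) = inter (gm t w0) (gm t w1) $$ (a,b)" .
  qed (use c in \<open>auto simp: gm_def\<close>)
qed

definition sw :: "nat \<Rightarrow> nat" where "sw i = (if even i then Suc i else i - 1)"

lemma sw_sw[simp]: "sw (sw i) = i"
proof (cases "even i")
  case True then show ?thesis by (simp add: sw_def)
next
  case False then have "i > 0" using odd_pos by blast
  then show ?thesis using False by (simp add: sw_def)
qed
lemma sw_lt: assumes "even n" "i < n" shows "sw i < n"
proof (cases "even i")
  case True then have "Suc i \<noteq> n" using assms(1) by auto
  then show ?thesis using assms True by (simp add: sw_def)
next
  case False then show ?thesis using assms by (simp add: sw_def)
qed
lemma sw_inj[simp]: "sw i = sw j \<longleftrightarrow> i = j" by (metis sw_sw)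
lemma sw_add: assumes "even ofs" shows "sw (ofs + i) = ofs + sw i"
proof (cases "even i")
  case True then show ?thesis using assms by (simp add: sw_def)
next
  case False then have "i > 0" using odd_pos by blast
  then show ?thesis using False assms by (simp add: sw_def)
qed

definition pmx :: "nat \<Rightarrow> 'a::field mat" where
  "pmx n = mat n n (\<lambda>(i,j). if j = sw i then 1 else 0)"

lemma pmx_dims[simp]: "dim_row (pmx n) = n" "dim_col (pmx n) = n" by (auto simp: pmx_def)

lemma sw_eq: "j = sw c \<longleftrightarrow> c = sw j" by (metis sw_sw)

lemma pmx_left:
  assumes "X \<in> carrier_mat a b" "even a" "i < a" "j < b"
  shows "(pmx a * X) $$ (i,j) = X $$ (sw i, j)"
proof -
  have d: "dim_row X = a" "dim_col X = b" using assms(1) by auto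
  have "(pmx a * X) $$ (i,j) = row (pmx a) i \<bullet> col X j"
    using assms(3,4) d by (simp only: index_mult_mat pmx_dims)
  also have "\<dots> = (\<Sum>c=0..<a. row (pmx a) i $ c * col X j $ c)"
    using d by (simp only: scalar_prod_def dim_col)
  also have "\<dots> = (\<Sum>c=0..<a. pmx a $$ (i,c) * X $$ (c,j))"
    using assms(3,4) d by (intro sum.cong refl) (simp add: index_row index_col)
  also have "\<dots> = (\<Sum>c=0..<a. (if c = sw i then X $$ (c,j) else 0))"
    using assms(3) by (intro sum.cong) (auto simp: pmx_def)
  also have "\<dots> = X $$ (sw i, j)" using sw_lt[OF assms(2,3)] by (simp add: sum.delta)
  finally show ?thesis .
qed

lemma pmx_right:
  assumes "X \<in> carrier_mat a b" "even b" "i < a" "j < b"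
  shows "(X * pmx b) $$ (i,j) = X $$ (i, sw j)"
proof -
  have d: "dim_row X = a" "dim_col X = b" using assms(1) by auto
  have "(X * pmx b) $$ (i,j) = row X i \<bullet> col (pmx b) j"
    using assms(3,4) d by (simp only: index_mult_mat pmx_dims)
  also have "\<dots> = (\<Sum>c=0..<b. row X i $ c * col (pmx b) j $ c)"
    using d by (simp only: scalar_prod_def dim_col pmx_dims)
  also have "\<dots> = (\<Sum>c=0..<b. X $$ (i,c) * pmx b $$ (c,j))"
    using assms(3,4) d by (intro sum.cong refl) (simp add: index_row index_col)
  also have "\<dots> = (\<Sum>c=0..<b. (if c = sw j then X $$ (i,c) else 0))"
  proof (intro sum.cong refl)
    fix c assume "c \<in> {0..<b}"
    then show "X $$ (i,c) * pmx b $$ (c,j) = (if c = sw j then X $$ (i,c) else 0)"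
      using assms(4) sw_eq[of c j] by (auto simp: pmx_def)
  qed
  also have "\<dots> = X $$ (i, sw j)" using sw_lt[OF assms(2,4)] by (simp add: sum.delta)
  finally show ?thesis .
qed

lemma pmx_conj:
  assumes "X \<in> carrier_mat a b" "even a" "even b" "i < a" "j < b"
  shows "(pmx a * X * pmx b) $$ (i,j) = X $$ (sw i, sw j)"
proof -
  have c0: "(pmx a :: 'a mat) \<in> carrier_mat a a" unfolding carrier_mat_def by simp
  have c: "pmx a * X \<in> carrier_mat a b" by (rule mult_carrier_mat[OF c0 assms(1)])
  have "(pmx a * X * pmx b) $$ (i,j) = (pmx a * X) $$ (i, sw j)"
    by (rule pmx_right[OF c assms(3,4,5)])
  also have "\<dots> = X $$ (sw i, sw j)" by (rule pmx_left[OF assms(1,2,4) sw_lt[OF assms(3,5)]])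
  finally show ?thesis .
qed

lemma pmx_sq: assumes "even a" shows "pmx a * pmx a = (1\<^sub>m a :: 'a::field mat)"
proof (rule eq_matI)
  fix i j assume ij: "i < dim_row (1\<^sub>m a :: 'a mat)" "j < dim_col (1\<^sub>m a :: 'a mat)"
  then have ij': "i < a" "j < a" by (simp_all only: index_one_mat)
  have c: "(pmx a :: 'a mat) \<in> carrier_mat a a" unfolding carrier_mat_def by simp
  have "(pmx a * pmx a :: 'a mat) $$ (i,j) = pmx a $$ (sw i, j)"
    by (rule pmx_left[OF c assms ij'])
  also have "\<dots> = (if j = sw (sw i) then 1 else 0)" using ij' sw_lt[OF assms, of i] by (simp add: pmx_def)
  also have "\<dots> = (1\<^sub>m a :: 'a mat) $$ (i,j)" using ij' by simp
  finally show "(pmx a * pmx a :: 'a mat) $$ (i,j) = (1\<^sub>m a :: 'a mat) $$ (i,j)" .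
next
  show "dim_row (pmx a * pmx a :: 'a mat) = dim_row (1\<^sub>m a :: 'a mat)" by simp
  show "dim_col (pmx a * pmx a :: 'a mat) = dim_col (1\<^sub>m a :: 'a mat)" by simp
qed

lemma TI_sw:
  assumes "TI M1 p E1" "TI M2 p E2" "E1 \<in> carrier_mat a b" "E2 \<in> carrier_mat a b"
    "a \<in> {2,4}" "b \<in> {2,4}" "i < a" "j < b" "M1 \<in> carrier_mat 2 4" "M2 \<in> carrier_mat 2 4"
    "\<forall>i<2. \<forall>j<4. M2 $$ (i,j) = M1 $$ (sw i, sw j)"
  shows "E1 $$ (sw i, sw j) = E2 $$ (i,j)"
proof -
  have si: "sw i < a" "sw j < b" using assms(5-8) sw_lt by auto
  show ?thesis
  proof (cases "a = 2 \<and> b = 4")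
    case True
    then have "E1 = lin p \<cdot>\<^sub>m M1" "E2 = lin p \<cdot>\<^sub>m M2" using assms(1-4) unfolding TI_def by auto
    then show ?thesis using True assms(7-11) si by auto
  next
    case F: False
    show ?thesis
    proof (cases "a = b")
      case True
      then have "E1 = cst p \<cdot>\<^sub>m 1\<^sub>m a" "E2 = cst p \<cdot>\<^sub>m 1\<^sub>m a" using assms(1-4) F unfolding TI_def by auto
      then show ?thesis using True assms(7-8) si by auto
    next
      case False
      then have "E1 = 0\<^sub>m a b" "E2 = 0\<^sub>m a b" using assms(1-4) F unfolding TI_def by auto
      then show ?thesis using assms(7-8) si by auto
    qed
  qed
qed

lemma even_sum_list: "\<forall>x\<in>set xs. even (x::nat) \<Longrightarrow> even (sum_list xs)"
  by (induction xs) auto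

lemma subst_tensor:
  assumes P: "subst_pmat t [M1] P" and Q: "subst_pmat t [M2] Q"
    and M: "M1 \<in> carrier_mat 2 4" "M2 \<in> carrier_mat 2 4"
    and rel: "\<forall>i<2. \<forall>j<4. M2 $$ (i,j) = M1 $$ (sw i, sw j)"
  shows "Q = pmx (dim_row P) * P * pmx (dim_col P) \<and> even (dim_row P)"
proof -
  have lab0: "\<forall>d\<in>set (prows t) \<union> set (pcols t). case d of RowOf i \<Rightarrow> i < length [M1] | ColOf i \<Rightarrow> i < length [M1]"
    using P unfolding subst_pmat_def Let_def by blast
  note lab = lab0
  have dv: "\<forall>d\<in>set (prows t) \<union> set (pcols t). dimval [M2] d = dimval [M1] d \<and> dimval [M1] d \<in> {2,4}"
  proof
    fix d assume "d \<in> set (prows t) \<union> set (pcols t)"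
    then have "case d of RowOf i \<Rightarrow> i < length [M1] | ColOf i \<Rightarrow> i < length [M1]" using lab by blast
    then show "dimval [M2] d = dimval [M1] d \<and> dimval [M1] d \<in> {2,4}" using M by (cases d) auto
  qed
  define R where "R = map (dimval [M1]) (prows t)"
  define C where "C = map (dimval [M1]) (pcols t)"
  have R2: "map (dimval [M2]) (prows t) = R" and C2: "map (dimval [M2]) (pcols t) = C"
    using dv unfolding R_def C_def by (auto intro!: map_cong)
  have R24: "\<forall>x\<in>set R. x \<in> {2,4}" and C24: "\<forall>x\<in>set C. x \<in> {2,4}"
    using dv unfolding R_def C_def by auto
  have evR: "\<And>r. even (sum_list (take r R))" "even (sum_list R)"
  proof -
    have eR: "\<forall>x\<in>set R. even x" using R24 by auto
    show "\<And>r. even (sum_list (take r R))" using eR by (meson even_sum_list in_set_takeD)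
    show "even (sum_list R)" using eR by (rule even_sum_list)
  qed
  have evC: "\<And>r. even (sum_list (take r C))" "even (sum_list C)"
  proof -
    have eR: "\<forall>x\<in>set C. even x" using C24 by auto
    show "\<And>r. even (sum_list (take r C))" using eR by (meson even_sum_list in_set_takeD)
    show "even (sum_list C)" using eR by (rule even_sum_list)
  qed
  obtain E1 where dP: "dim_row P = sum_list R" "dim_col P = sum_list C"
    and E1: "\<forall>r < length R. \<forall>s < length C.
          E1 r s \<in> carrier_mat (R ! r) (C ! s) \<and> ev [M1] (pent t r s) (E1 r s) \<and>
          (\<forall>i < R ! r. \<forall>j < C ! s.
             P $$ (sum_list (take r R) + i, sum_list (take s C) + j) = E1 r s $$ (i, j))"
    using P unfolding subst_pmat_def Let_def R_def[symmetric] C_def[symmetric] by auto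
  obtain E2 where dQ: "dim_row Q = sum_list R" "dim_col Q = sum_list C"
    and E2: "\<forall>r < length R. \<forall>s < length C.
          E2 r s \<in> carrier_mat (R ! r) (C ! s) \<and> ev [M2] (pent t r s) (E2 r s) \<and>
          (\<forall>i < R ! r. \<forall>j < C ! s.
             Q $$ (sum_list (take r R) + i, sum_list (take s C) + j) = E2 r s $$ (i, j))"
    using Q unfolding subst_pmat_def Let_def R2 C2 by auto
  have "Q = pmx (dim_row P) * P * pmx (dim_col P)"
  proof (rule eq_matI)
    fix a b assume ab: "a < dim_row (pmx (dim_row P) * P * pmx (dim_col P))"
      "b < dim_col (pmx (dim_row P) * P * pmx (dim_col P))"
    then have a: "a < sum_list R" and b: "b < sum_list C" using dP by auto
    obtain r i where r: "r < length R" "i < R!r" "a = sum_list (take r R) + i" using decomp[OF a] by blast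
    obtain s j where s: "s < length C" "j < C!s" "b = sum_list (take s C) + j" using decomp[OF b] by blast
    have Rr: "R!r \<in> {2,4}" and Cs: "C!s \<in> {2,4}" using R24 C24 r s by auto
    have evrs: "even (R!r)" "even (C!s)" using Rr Cs by auto
    have swi: "sw i < R!r" "sw j < C!s" using sw_lt[OF evrs(1) r(2)] sw_lt[OF evrs(2) s(2)] by auto
    have e1: "E1 r s \<in> carrier_mat (R ! r) (C ! s)" "ev [M1] (pent t r s) (E1 r s)"
      "\<forall>i < R ! r. \<forall>j < C ! s.
             P $$ (sum_list (take r R) + i, sum_list (take s C) + j) = E1 r s $$ (i, j)"
      using E1 r(1) s(1) by blast+
    have e2: "E2 r s \<in> carrier_mat (R ! r) (C ! s)" "ev [M2] (pent t r s) (E2 r s)"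
      "\<forall>i < R ! r. \<forall>j < C ! s.
             Q $$ (sum_list (take r R) + i, sum_list (take s C) + j) = E2 r s $$ (i, j)"
      using E2 r(1) s(1) by blast+
    have "(pmx (dim_row P) * P * pmx (dim_col P)) $$ (a,b) = P $$ (sw a, sw b)"
    proof -
      have Pc: "P \<in> carrier_mat (sum_list R) (sum_list C)" using dP unfolding carrier_mat_def by blast
      show ?thesis using pmx_conj[OF Pc evR(2) evC(2) a b] dP by simp
    qed
    also have "\<dots> = P $$ (sum_list (take r R) + sw i, sum_list (take s C) + sw j)"
      using r(3) s(3) sw_add[OF evR(1), of r i] sw_add[OF evC(1), of s j] by simp
    also have "P $$ (sum_list (take r R) + sw i, sum_list (take s C) + sw j) = E1 r s $$ (sw i, sw j)"
      using e1(3) swi by blast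
    also have "\<dots> = E2 r s $$ (i, j)"
      by (rule TI_sw[OF ev_tensor[OF e1(2) M(1)] ev_tensor[OF e2(2) M(2)] e1(1) e2(1) Rr Cs r(2) s(2) M rel])
    also have "\<dots> = Q $$ (a,b)" using e2(3) r(2,3) s(2,3) by simp
    finally show "Q $$ (a,b) = (pmx (dim_row P) * P * pmx (dim_col P)) $$ (a,b)" by simp
  qed (use dP dQ in auto)
  then show ?thesis using dP evR by simp
qed

lemma tensor_part: "\<not> contains (pair_problem :: 'a::field matrix_problem) (tensor_problem p)"
proof
  assume "contains (pair_problem :: 'a::field matrix_problem) (tensor_problem p)"
  then obtain T where c1: "\<forall>A\<in>fst (tensor_problem p). \<exists>Ms. subst_tuple T A Ms"
    and c2: "\<forall>A\<in>fst (tensor_problem p). \<forall>Ms. subst_tuple T A Ms \<longrightarrow> Ms \<in> fst (pair_problem :: 'a matrix_problem)"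
    and c3: "\<forall>A\<in>fst (tensor_problem p). \<forall>A'\<in>fst (tensor_problem p). \<forall>Ms Ms'. subst_tuple T A Ms \<longrightarrow> subst_tuple T A' Ms' \<longrightarrow>
        (snd (tensor_problem p) A A' \<longleftrightarrow> snd (pair_problem :: 'a matrix_problem) Ms Ms')"
    unfolding contains_def by blast
  define M1 :: "'a mat" where "M1 = mat 2 4 (\<lambda>(i,j). if i = 0 \<and> j = 0 then 1 else 0)"
  define M2 :: "'a mat" where "M2 = mat 2 4 (\<lambda>(i,j). if i = 1 \<and> j = 1 then 1 else 0)"
  have M1c: "M1 \<in> carrier_mat 2 4" and M2c: "M2 \<in> carrier_mat 2 4" by (auto simp: M1_def M2_def)
  have rel: "\<forall>i<2. \<forall>j<4. M2 $$ (i,j) = M1 $$ (sw i, sw j)"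
  proof (intro allI impI)
    fix i j :: nat assume ij: "i < 2" "j < 4"
    have "sw i < 2" "sw j < 4" using sw_lt[of 2 i] sw_lt[of 4 j] ij by simp_all
    moreover have "sw i = 0 \<longleftrightarrow> i = 1" "sw j = 0 \<longleftrightarrow> j = 1" using ij by (auto simp: sw_def) presburger+
    ultimately show "M2 $$ (i,j) = M1 $$ (sw i, sw j)" using ij by (auto simp: M1_def M2_def)
  qed
  have in1: "[M1] \<in> fst (tensor_problem p)" using M1c unfolding tensor_problem_def
    by (auto intro!: exI[of _ 2])
  have in2: "[M2] \<in> fst (tensor_problem p)" using M2c unfolding tensor_problem_def
    by (auto intro!: exI[of _ 2])
  obtain Ms1 where s1: "subst_tuple T [M1] Ms1" using c1 in1 by blast
  obtain Ms2 where s2: "subst_tuple T [M2] Ms2" using c1 in2 by blast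
  have "Ms1 \<in> fst (pair_problem :: 'a matrix_problem)" using c2 in1 s1 by blast
  then obtain P0 P1 n where Ms1: "Ms1 = [P0, P1]" "P0 \<in> carrier_mat n n" "P1 \<in> carrier_mat n n"
    by (auto simp: pair_problem_def)
  have lT: "length T = 2" using s1 Ms1 by (simp add: subst_tuple_def)
  have sp: "\<And>l. l < 2 \<Longrightarrow> subst_pmat (T!l) [M1] (Ms1!l) \<and> subst_pmat (T!l) [M2] (Ms2!l)"
    using s1 s2 lT by (auto simp: subst_tuple_def)
  have l2: "length Ms2 = 2" using s2 lT by (simp add: subst_tuple_def)
  have dP: "dim_row P0 = n" "dim_col P0 = n" "dim_row P1 = n" "dim_col P1 = n" using Ms1 by auto
  have sp0: "subst_pmat (T!0) [M1] P0" "subst_pmat (T!0) [M2] (Ms2!0)" using sp[of 0] Ms1(1) by auto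
  have sp1: "subst_pmat (T!1) [M1] P1" "subst_pmat (T!1) [M2] (Ms2!1)" using sp[of 1] Ms1(1) by auto
  have Q0: "Ms2!0 = pmx n * P0 * pmx n" and evn: "even n"
    using subst_tensor[OF sp0 M1c M2c rel] unfolding dP by blast+
  have Q1: "Ms2!1 = pmx n * P1 * pmx n"
    using subst_tensor[OF sp1 M1c M2c rel] unfolding dP by blast
  have Ms2: "Ms2 = [pmx n * P0 * pmx n, pmx n * P1 * pmx n]"
    using l2 Q0 Q1 by (cases Ms2; cases "tl Ms2"; auto)
  have pc: "(pmx n :: 'a mat) \<in> carrier_mat n n" unfolding carrier_mat_def by simp
  have "snd (pair_problem :: 'a matrix_problem) Ms1 Ms2"
    unfolding pair_problem_def snd_conv
    apply (rule exI[of _ n], rule exI[of _ "pmx n"], rule exI[of _ "pmx n"])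
    apply (intro conjI pc pmx_sq[OF evn])
    apply (rule exI[of _ P0], rule exI[of _ P1])
    using Ms1 Ms2 by auto
  then have "snd (tensor_problem p) [M1] [M2]" using c3 in1 in2 s1 s2 by blast
  then obtain m M N C D where h: "[M1] = [M]" "[M2] = [N]" "M \<in> carrier_mat m (m*m)"
    "C \<in> carrier_mat m m" "D \<in> carrier_mat m m" "D * transpose_mat C = 1\<^sub>m m"
    "\<forall>j1<m. \<forall>j2<m. \<forall>j3<m.
          tent m N j1 j2 j3 =
            (\<Sum>i1<m. \<Sum>i2<m. \<Sum>i3<m. tent m M i1 i2 i3 *
               (\<lambda>l. if l < p then C else D) 0 $$ (i1, j1) * (\<lambda>l. if l < p then C else D) 1 $$ (i2, j2) *
               (\<lambda>l. if l < p then C else D) 2 $$ (i3, j3))"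
    unfolding tensor_problem_def snd_conv Let_def by blast
  have m2: "m = 2" using h(1,3) M1c by auto
  define F0 where "F0 = (if 0 < p then C else D)"
  define F1 where "F1 = (if 1 < p then C else D)"
  define F2 where "F2 = (if 2 < p then C else D)"
  have key: "\<And>j1 j2 j3. j1 < 2 \<Longrightarrow> j2 < 2 \<Longrightarrow> j3 < 2 \<Longrightarrow>
      M2 $$ (j1, j3 * 2 + j2) = F0 $$ (0, j1) * F1 $$ (0, j2) * F2 $$ (0, j3)"
  proof -
    fix j1 j2 j3 :: nat assume j: "j1 < 2" "j2 < 2" "j3 < 2"
    have "tent 2 M2 j1 j2 j3 = (\<Sum>i1<2. \<Sum>i2<2. \<Sum>i3<2. tent 2 M1 i1 i2 i3 *
               F0 $$ (i1, j1) * F1 $$ (i2, j2) * F2 $$ (i3, j3))"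
      using h(7) h(1,2) j m2 unfolding F0_def F1_def F2_def by auto
    also have "\<dots> = F0 $$ (0, j1) * F1 $$ (0, j2) * F2 $$ (0, j3)"
      by (simp add: numeral_2_eq_2 tent_def M1_def)
    finally show "M2 $$ (j1, j3 * 2 + j2) = F0 $$ (0, j1) * F1 $$ (0, j2) * F2 $$ (0, j3)"
      by (simp add: tent_def)
  qed
  have k1: "F0 $$ (0, 1) * F1 $$ (0, 1) * F2 $$ (0, 0) = 1" using key[of 1 1 0] by (simp add: M2_def)
  have k2: "F0 $$ (0, 0) * F1 $$ (0, 1) * F2 $$ (0, 0) = 0" using key[of 0 1 0] by (simp add: M2_def)
  have k3: "F0 $$ (0, 1) * F1 $$ (0, 0) * F2 $$ (0, 0) = 0" using key[of 1 0 0] by (simp add: M2_def)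
  have k4: "F0 $$ (0, 1) * F1 $$ (0, 1) * F2 $$ (0, 1) = 0" using key[of 1 1 1] by (simp add: M2_def)
  have nz: "F0 $$ (0, 1) \<noteq> 0" "F1 $$ (0, 1) \<noteq> 0" "F2 $$ (0, 0) \<noteq> 0" using k1 by auto
  have z: "F0 $$ (0, 0) = 0" "F1 $$ (0, 0) = 0" "F2 $$ (0, 1) = 0" using k2 k3 k4 nz by auto
  have "(D * transpose_mat C) $$ (0,0) = (\<Sum>c<2. D $$ (0,c) * C $$ (0,c))"
    using h(4,5) m2 by (auto simp: scalar_prod_def atLeast0LessThan intro!: sum.cong)
  also have "\<dots> = D $$ (0,0) * C $$ (0,0) + D $$ (0,1) * C $$ (0,1)" by (simp add: numeral_2_eq_2)
  also have "\<dots> = 0" using z unfolding F0_def F1_def F2_def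
    by (cases "p = 0"; cases "p = 1"; cases "p = 2"; auto)
  finally show False using h(6) m2 by (metis index_one_mat(1) one_neq_zero zero_less_numeral)
qed

lemma inv_T: "invertible_mat (mat 2 2 (\<lambda>(i,j). if i = 1 \<and> j = 0 then 0 else 1) :: 'a::field mat)"
proof -
  let ?T = "mat 2 2 (\<lambda>(i,j). if i = 1 \<and> j = 0 then 0 else 1) :: 'a mat"
  let ?B = "mat 2 2 (\<lambda>(i,j). if i = 0 \<and> j = 1 then -1 else if i = 1 \<and> j = 0 then 0 else 1) :: 'a mat"
  have 1: "?T * ?B = 1\<^sub>m 2"
    by (rule eq_matI) (auto simp: scalar_prod_def less_2_cases_iff atLeast0LessThan numeral_2_eq_2)
  have 2: "?B * ?T = 1\<^sub>m 2"
    by (rule eq_matI) (auto simp: scalar_prod_def less_2_cases_iff atLeast0LessThan numeral_2_eq_2)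
  show ?thesis unfolding invertible_mat_def inverts_mat_def square_mat.simps
    using 1 2 by auto
qed

lemma list2: "length xs = 2 \<Longrightarrow> xs = [xs!0, xs!1]"
  by (cases xs; cases "tl xs"; auto)

lemma spatial_part: "\<not> contains (pair_problem :: 'a::field matrix_problem) spatial2_problem"
proof
  assume "contains (pair_problem :: 'a::field matrix_problem) spatial2_problem"
  then obtain T where c1: "\<forall>A\<in>fst (spatial2_problem :: 'a matrix_problem). \<exists>Ms. subst_tuple T A Ms"
    and c2: "\<forall>A\<in>fst (spatial2_problem :: 'a matrix_problem). \<forall>Ms. subst_tuple T A Ms \<longrightarrow> Ms \<in> fst (pair_problem :: 'a matrix_problem)"
    and c3: "\<forall>A\<in>fst (spatial2_problem :: 'a matrix_problem). \<forall>A'\<in>fst (spatial2_problem :: 'a matrix_problem). \<forall>Ms Ms'. subst_tuple T A Ms \<longrightarrow> subst_tuple T A' Ms' \<longrightarrow>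
        (snd (spatial2_problem :: 'a matrix_problem) A A' \<longleftrightarrow> snd (pair_problem :: 'a matrix_problem) Ms Ms')"
    unfolding contains_def by blast
  define U :: "'a mat list" where "U = [1\<^sub>m 1, 0\<^sub>m 1 1]"
  define V :: "'a mat list" where "V = [1\<^sub>m 1, 1\<^sub>m 1]"
  define X :: "'a mat list" where "X = [1\<^sub>m 2, 0\<^sub>m 2 2]"
  define Dg :: "'a mat" where "Dg = mat 2 2 (\<lambda>(i,j). if i = 1 \<and> j = 1 then 1 else 0)"
  define Y :: "'a mat list" where "Y = [1\<^sub>m 2, Dg]"
  define wU :: "nat \<Rightarrow> 'a" where "wU = (\<lambda>v. if v = 0 then 1 else 0)"
  define wV :: "nat \<Rightarrow> 'a" where "wV = (\<lambda>v. 1)"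
  have inU: "U \<in> fst (spatial2_problem :: 'a matrix_problem)"
    unfolding spatial2_problem_def U_def by (auto intro!: exI[of _ 1])
  have inV: "V \<in> fst (spatial2_problem :: 'a matrix_problem)"
    unfolding spatial2_problem_def V_def by (auto intro!: exI[of _ 1])
  have inX: "X \<in> fst (spatial2_problem :: 'a matrix_problem)"
    unfolding spatial2_problem_def X_def by (auto intro!: exI[of _ 2])
  have inY: "Y \<in> fst (spatial2_problem :: 'a matrix_problem)"
    unfolding spatial2_problem_def Y_def Dg_def by (auto intro!: exI[of _ 2])
  obtain MsU where sU: "subst_tuple T U MsU" using c1 inU by blast
  obtain MsV where sV: "subst_tuple T V MsV" using c1 inV by blast
  obtain MsX where sX: "subst_tuple T X MsX" using c1 inX by blast
  obtain MsY where sY: "subst_tuple T Y MsY" using c1 inY by blast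
  have "MsU \<in> fst (pair_problem :: 'a matrix_problem)" using c2 inU sU by blast
  then have "length MsU = 2" by (auto simp: pair_problem_def)
  then have lT: "length T = 2" using sU by (simp add: subst_tuple_def)
  have lens: "length MsU = 2" "length MsV = 2" "length MsX = 2" "length MsY = 2"
    using sU sV sX sY lT by (simp_all add: subst_tuple_def)
  have gU: "\<And>l. l < 2 \<Longrightarrow> MsU ! l = gm (T!l) wU"
  proof -
    fix l :: nat assume l: "l < 2"
    show "MsU ! l = gm (T!l) wU"
      by (rule subst_diag1) (use sU l lT in \<open>auto simp: subst_tuple_def U_def wU_def less_2_cases_iff less_Suc_eq\<close>)
  qed
  have gV: "\<And>l. l < 2 \<Longrightarrow> MsV ! l = gm (T!l) wV"
  proof -
    fix l :: nat assume l: "l < 2"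
    show "MsV ! l = gm (T!l) wV"
      by (rule subst_diag1) (use sV l lT in \<open>auto simp: subst_tuple_def V_def wV_def less_2_cases_iff less_Suc_eq\<close>)
  qed
  have gX: "\<And>l. l < 2 \<Longrightarrow> MsX ! l = inter (gm (T!l) wU) (gm (T!l) wU)"
  proof -
    fix l :: nat assume l: "l < 2"
    show "MsX ! l = inter (gm (T!l) wU) (gm (T!l) wU)"
      by (rule subst_diag2) (use sX l lT in \<open>auto simp: subst_tuple_def X_def wU_def less_2_cases_iff less_Suc_eq\<close>)
  qed
  have gY: "\<And>l. l < 2 \<Longrightarrow> MsY ! l = inter (gm (T!l) wU) (gm (T!l) wV)"
  proof -
    fix l :: nat assume l: "l < 2"
    show "MsY ! l = inter (gm (T!l) wU) (gm (T!l) wV)"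
      by (rule subst_diag2) (use sY l lT in \<open>auto simp: subst_tuple_def Y_def Dg_def wU_def wV_def less_2_cases_iff less_Suc_eq\<close>)
  qed
  define G0 where "G0 = gm (T!0) wU"
  define G1 where "G1 = gm (T!1) wU"
  define H0 where "H0 = gm (T!0) wV"
  define H1 where "H1 = gm (T!1) wV"
  have MsU: "MsU = [G0, G1]" using list2[OF lens(1)] gU unfolding G0_def G1_def by simp
  have MsV: "MsV = [H0, H1]" using list2[OF lens(2)] gV unfolding H0_def H1_def by simp
  have MsX: "MsX = [inter G0 G0, inter G1 G1]" using list2[OF lens(3)] gX unfolding G0_def G1_def by simp
  have MsY: "MsY = [inter G0 H0, inter G1 H1]" using list2[OF lens(4)] gY unfolding G0_def G1_def H0_def H1_def by simp
  let ?Tm = "mat 2 2 (\<lambda>(i,j). if i = 1 \<and> j = 0 then 0 else 1) :: 'a mat"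
  have e1: "transpose_mat (1\<^sub>m 1) * (?Tm $$ (0,0) \<cdot>\<^sub>m 1\<^sub>m 1 + ?Tm $$ (1,0) \<cdot>\<^sub>m 0\<^sub>m 1 1) * 1\<^sub>m 1 = (1\<^sub>m 1 :: 'a mat)"
    by (rule eq_matI) auto
  have e2: "transpose_mat (1\<^sub>m 1) * (?Tm $$ (0,1) \<cdot>\<^sub>m 1\<^sub>m 1 + ?Tm $$ (1,1) \<cdot>\<^sub>m 0\<^sub>m 1 1) * 1\<^sub>m 1 = (1\<^sub>m 1 :: 'a mat)"
    by (rule eq_matI) auto
  have inv1: "invertible_mat (1\<^sub>m 1 :: 'a mat)"
    by (auto simp: invertible_mat_def inverts_mat_def intro!: exI[of _ "1\<^sub>m 1"])
  have "snd (spatial2_problem :: 'a matrix_problem) U V"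
    unfolding spatial2_problem_def snd_conv
    apply (rule exI[of _ 1], rule exI[of _ 1], rule exI[of _ "1\<^sub>m 1"], rule exI[of _ "1\<^sub>m 1"],
           rule exI[of _ ?Tm], rule exI[of _ "1\<^sub>m 1"], rule exI[of _ "0\<^sub>m 1 1"])
    using e1 e2 inv_T inv1 by (auto simp: U_def V_def)
  then have "snd (pair_problem :: 'a matrix_problem) MsU MsV" using c3 inU inV sU sV by blast
  then obtain n S0 Si0 M N where p: "S0 \<in> carrier_mat n n" "Si0 \<in> carrier_mat n n" "S0 * Si0 = 1\<^sub>m n" "Si0 * S0 = 1\<^sub>m n"
    "MsU = [M, N]" "M \<in> carrier_mat n n" "N \<in> carrier_mat n n" "MsV = [Si0 * M * S0, Si0 * N * S0]"
    unfolding pair_problem_def snd_conv by blast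
  have GH: "M = G0" "N = G1" "H0 = Si0 * M * S0" "H1 = Si0 * N * S0" using p(5,8) MsU MsV by auto
  define S where "S = inter (1\<^sub>m n) S0"
  define Si where "Si = inter (1\<^sub>m n) Si0"
  have one: "1\<^sub>m n \<in> carrier_mat n n" by simp
  have SSi: "S * Si = 1\<^sub>m (2*n)"
  proof -
    have "S * Si = inter (1\<^sub>m n * 1\<^sub>m n) (S0 * Si0)" unfolding S_def Si_def
      by (rule inter_mult[OF one p(1) one p(2)])
    also have "\<dots> = inter (1\<^sub>m n) (1\<^sub>m n)" unfolding p(3) by (simp only: left_mult_one_mat[OF one])
    also have "\<dots> = 1\<^sub>m (2*n)" by (rule inter_one)
    finally show ?thesis .
  qed
  have SiS: "Si * S = 1\<^sub>m (2*n)"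
  proof -
    have "Si * S = inter (1\<^sub>m n * 1\<^sub>m n) (Si0 * S0)" unfolding S_def Si_def
      by (rule inter_mult[OF one p(2) one p(1)])
    also have "\<dots> = inter (1\<^sub>m n) (1\<^sub>m n)" unfolding p(4) by (simp only: left_mult_one_mat[OF one])
    also have "\<dots> = 1\<^sub>m (2*n)" by (rule inter_one)
    finally show ?thesis .
  qed
  have Sc2: "S \<in> carrier_mat (2*n) (2*n)" unfolding S_def carrier_mat_def inter_dims by simp
  have Sic2: "Si \<in> carrier_mat (2*n) (2*n)" unfolding Si_def carrier_mat_def inter_dims by simp
  have conj: "\<And>K :: 'a mat. K \<in> carrier_mat n n \<Longrightarrow> Si * inter K K * S = inter K (Si0 * K * S0)"
  proof -
    fix K :: "'a mat" assume K: "K \<in> carrier_mat n n"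
    have "Si * inter K K = inter (1\<^sub>m n * K) (Si0 * K)" unfolding Si_def by (rule inter_mult[OF one p(2) K K])
    also have "\<dots> = inter K (Si0 * K)" using K by simp
    finally have a: "Si * inter K K = inter K (Si0 * K)" .
    have SiK: "Si0 * K \<in> carrier_mat n n" using p(2) K by simp
    have "inter K (Si0 * K) * S = inter (K * 1\<^sub>m n) (Si0 * K * S0)" unfolding S_def
      by (rule inter_mult[OF K SiK one p(1)])
    also have "\<dots> = inter K (Si0 * K * S0)" using K by simp
    finally show "Si * inter K K * S = inter K (Si0 * K * S0)" using a by simp
  qed
  have "snd (pair_problem :: 'a matrix_problem) MsX MsY"
    unfolding pair_problem_def snd_conv
    apply (rule exI[of _ "2*n"], rule exI[of _ S], rule exI[of _ Si])
    apply (intro conjI SSi SiS Sc2 Sic2)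
    apply (rule exI[of _ "inter M M"], rule exI[of _ "inter N N"])
    apply (intro conjI)
    subgoal unfolding MsX GH(1,2) by (rule refl)
    subgoal using p(6) unfolding carrier_mat_def inter_dims by simp
    subgoal using p(7) unfolding carrier_mat_def inter_dims by simp
    subgoal unfolding MsY using conj[OF p(6)] conj[OF p(7)] GH by simp
    done
  then have "snd (spatial2_problem :: 'a matrix_problem) X Y" using c3 inX inY sX sY by blast
  then obtain m n' R S' Tm A1 A2 where q: "X = [A1, A2]" "A1 \<in> carrier_mat m n'" "A2 \<in> carrier_mat m n'"
    "R \<in> carrier_mat m m" "S' \<in> carrier_mat n' n'"
    "Y = [transpose_mat R * (Tm $$ (0,0) \<cdot>\<^sub>m A1 + Tm $$ (1,0) \<cdot>\<^sub>m A2) * S',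
            transpose_mat R * (Tm $$ (0,1) \<cdot>\<^sub>m A1 + Tm $$ (1,1) \<cdot>\<^sub>m A2) * S']"
    unfolding spatial2_problem_def snd_conv by blast
  have A: "A1 = 1\<^sub>m 2" "A2 = 0\<^sub>m 2 2" using q(1) X_def by auto
  have mn: "m = 2" "n' = 2" using q(2) A by auto
  define Z where "Z = transpose_mat R * S'"
  have Rt: "transpose_mat R \<in> carrier_mat 2 2" using q(4) mn by simp
  have Sc: "S' \<in> carrier_mat 2 2" using q(5) mn by simp
  have lin: "\<And>a b. transpose_mat R * (a \<cdot>\<^sub>m 1\<^sub>m 2 + b \<cdot>\<^sub>m 0\<^sub>m 2 2) * S' = a \<cdot>\<^sub>m Z"
  proof -
    fix a b :: 'a
    have "a \<cdot>\<^sub>m 1\<^sub>m 2 + b \<cdot>\<^sub>m 0\<^sub>m 2 2 = (a \<cdot>\<^sub>m 1\<^sub>m 2 :: 'a mat)" by (rule eq_matI) auto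
    then have "transpose_mat R * (a \<cdot>\<^sub>m 1\<^sub>m 2 + b \<cdot>\<^sub>m 0\<^sub>m 2 2) * S' = transpose_mat R * (a \<cdot>\<^sub>m 1\<^sub>m 2) * S'" by simp
    also have "\<dots> = (a \<cdot>\<^sub>m transpose_mat R) * S'"
      using mult_smult_distrib[OF Rt, of "1\<^sub>m 2" 2 a] Rt by simp
    also have "\<dots> = a \<cdot>\<^sub>m Z" unfolding Z_def by (rule mult_smult_assoc_mat[OF Rt Sc])
    finally show "transpose_mat R * (a \<cdot>\<^sub>m 1\<^sub>m 2 + b \<cdot>\<^sub>m 0\<^sub>m 2 2) * S' = a \<cdot>\<^sub>m Z" .
  qed
  have Y0: "1\<^sub>m 2 = Tm $$ (0,0) \<cdot>\<^sub>m Z" and Y1: "Dg = Tm $$ (0,1) \<cdot>\<^sub>m Z"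
    using q(6) Y_def A lin by auto
  have Zc: "Z \<in> carrier_mat 2 2" unfolding Z_def using Rt Sc by simp
  have f1: "Tm $$ (0,0) * Z $$ (0,0) = 1" using arg_cong[OF Y0, of "\<lambda>A. A $$ (0,0)"] Zc by simp
  have f2: "Tm $$ (0,1) * Z $$ (0,0) = 0" using arg_cong[OF Y1, of "\<lambda>A. A $$ (0,0)"] Zc by (simp add: Dg_def)
  have f3: "Tm $$ (0,1) * Z $$ (1,1) = 1" using arg_cong[OF Y1, of "\<lambda>A. A $$ (1,1)"] Zc by (simp add: Dg_def)
  from f1 f2 have "Tm $$ (0,1) = 0" by (metis mult_eq_0_iff zero_neq_one mult_zero_left)
  then show False using f3 by simp
qed

theorem theorem4p4:
  shows "\<not> contains (pair_problem :: 'a::field matrix_problem) spatial2_problem \<and>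
         (\<forall>p\<in>{0,1,2,3}. \<not> contains (pair_problem :: 'a::field matrix_problem) (tensor_problem p))"
  using spatial_part tensor_part by blast

end
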